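(* For every $\mathrm{CCS}^-$ process $P$ and every $P'$ with $!P\Rightarrow P'$, we have $!P\approx P'$.
   Context: $\mathrm{CCS}^-$ (CCScore without restriction) processes are given by the grammar $P,Q ::= 0 \mid a.P \mid \overline{a}.P \mid P\,|\,Q \mid\ !P$, where $a$ ranges over an infinite set of names. Actions are inputs $a$, outputs $\overline{a}$ (visible actions) and $\tau$. Transitions: $a.P \xrightarrow{a} P$; $\overline{a}.P \xrightarrow{\overline{a}} P$; if $P\xrightarrow{\gamma}P'$ then $P|Q\xrightarrow{\gamma}P'|Q$ and $Q|P\xrightarrow{\gamma}Q|P'$; if $P\xrightarrow{\overline a}P'$ and $Q\xrightarrow{a}Q'$ then $P|Q\xrightarrow{\tau}P'|Q'$ and $Q|P\xrightarrow{\tau}Q'|P'$; if $P\xrightarrow{\gamma}P'$ then $!P\xrightarrow{\gamma}P'\,|\,!P$; if $P\xrightarrow{a}P'$ and $P\xrightarrow{\overline a}P''$ then $!P\xrightarrow{\tau}P'|P''|\,!P$. $\Rightarrow$ is the reflexive transitive closure of $\xrightarrow{\tau}$; $\stackrel{\hat\alpha}{\Rightarrow}$ is $\Rightarrow$ if $\alpha=\tau$ and $\Rightarrow\xrightarrow{\alpha}\Rightarrow$ otherwise. A process is divergent if it has an infinite sequence of $\tau$-transitions; a relation $\mathcal R$ is divergence-sensitive if $P\,\mathcal R\,Q$ implies ($P$ divergent iff $Q$ divergent). Weak bisimilarity $\approx$ is the union of all symmetric divergence-sensitive relations $\mathcal R$ such that $P\,\mathcal R\,Q$ and $P\xrightarrow{\alpha}P'$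 imply $Q\stackrel{\hat\alpha}{\Rightarrow}Q'$ for some $Q'$ with $P'\,\mathcal R\,Q'$. *)

theory Defs
  imports Main
begin

datatype 'n proc =
    Nil
  | In 'n "'n proc"
  | Out 'n "'n proc"
  | Par "'n proc" "'n proc"
  | Bang "'n proc"

datatype 'n act = AIn 'n | AOut 'n | Tau

inductive trans :: "'n proc \<Rightarrow> 'n act \<Rightarrow> 'n proc \<Rightarrow> bool" where
  t_in:    "trans (In a P) (AIn a) P"
| t_out:   "trans (Out a P) (AOut a) P"
| t_parL:  "trans P g P' \<Longrightarrow> trans (Par P Q) g (Par P' Q)"
| t_parR:  "trans P g P' \<Longrightarrow> trans (Par Q P) g (Par Q P')"
| t_comL:  "trans P (AOut a) P' \<Longrightarrow> trans Q (AIn a) Q' \<Longrightarrow> trans (Par P Q) Tau (Par P' Q')"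
| t_comR:  "trans P (AOut a) P' \<Longrightarrow> trans Q (AIn a) Q' \<Longrightarrow> trans (Par Q P) Tau (Par Q' P')"
| t_bang:  "trans P g P' \<Longrightarrow> trans (Bang P) g (Par P' (Bang P))"
| t_bangc: "trans P (AIn a) P' \<Longrightarrow> trans P (AOut a) P'' \<Longrightarrow>
            trans (Bang P) Tau (Par (Par P' P'') (Bang P))"

definition tau_star :: "'n proc \<Rightarrow> 'n proc \<Rightarrow> bool" where
  "tau_star = (\<lambda>P Q. trans P Tau Q)\<^sup>*\<^sup>*"

definition weak_trans :: "'n proc \<Rightarrow> 'n act \<Rightarrow> 'n proc \<Rightarrow> bool" where
  "weak_trans P \<alpha> Q =
     (if \<alpha> = Tau then tau_star P Q
      else (\<exists>P1 P2. tau_star P P1 \<and> trans P1 \<alpha> P2 \<and> tau_star P2 Q))"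

definition divergent :: "'n proc \<Rightarrow> bool" where
  "divergent P = (\<exists>f. f 0 = P \<and> (\<forall>i. trans (f i) Tau (f (Suc i))))"

definition weak_bisimulation :: "('n proc \<Rightarrow> 'n proc \<Rightarrow> bool) \<Rightarrow> bool" where
  "weak_bisimulation R =
     ((\<forall>P Q. R P Q \<longrightarrow> R Q P)
    \<and> (\<forall>P Q. R P Q \<longrightarrow> (divergent P \<longleftrightarrow> divergent Q))
    \<and> (\<forall>P Q \<alpha> P'. R P Q \<longrightarrow> trans P \<alpha> P' \<longrightarrow> (\<exists>Q'. weak_trans Q \<alpha> Q' \<and> R P' Q')))"

definition wbisim :: "'n proc \<Rightarrow> 'n proc \<Rightarrow> bool" where
  "wbisim P Q = (\<exists>R. weak_bisimulation R \<and> R P Q)"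

end

theory Submission
  imports Defs "HOL-Library.Multiset"
begin

fun flat :: "'n proc \<Rightarrow> 'n proc multiset" where
  "flat Nil = {#}"
| "flat (Par X Y) = flat X + flat Y"
| "flat X = {#X#}"

inductive mstep :: "'n proc multiset \<Rightarrow> 'n act \<Rightarrow> 'n proc multiset \<Rightarrow> bool" where
  ms_one: "trans c \<alpha> Q \<Longrightarrow> mstep (add_mset c M) \<alpha> (M + flat Q)"
| ms_com: "trans c1 (AOut a) Q1 \<Longrightarrow> trans c2 (AIn a) Q2 \<Longrightarrow>
     mstep (add_mset c1 (add_mset c2 M)) Tau (M + flat Q1 + flat Q2)"

lemma mstep_frame: "mstep M \<alpha> M' \<Longrightarrow> mstep (M + N) \<alpha> (M' + N)"
proof (induction rule: mstep.induct)
  case (ms_one c \<alpha> Q M)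
  then show ?case using mstep.ms_one[of c \<alpha> Q "M+N"] by (simp add: ac_simps)
next
  case (ms_com c1 a Q1 c2 Q2 M)
  then show ?case using mstep.ms_com[of c1 a Q1 c2 Q2 "M+N"] by (simp add: ac_simps)
qed

lemma mstep_frame2: "mstep M \<alpha> M' \<Longrightarrow> mstep (N + M) \<alpha> (N + M')"
  using mstep_frame by (metis add.commute)

lemma mstep_vis: "mstep M \<alpha> M' \<Longrightarrow> \<alpha> \<noteq> Tau \<Longrightarrow>
   \<exists>c M0 Q. M = add_mset c M0 \<and> trans c \<alpha> Q \<and> M' = M0 + flat Q"
  by (cases rule: mstep.cases) auto

lemma sound: "trans X \<alpha> X' \<Longrightarrow> mstep (flat X) \<alpha> (flat X')"
proof (induction rule: trans.induct)
  case (t_in a P)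
  then show ?case using mstep.ms_one[OF trans.t_in, of a P "{#}"] by simp
next
  case (t_out a P)
  then show ?case using mstep.ms_one[OF trans.t_out, of a P "{#}"] by simp
next
  case (t_parL P g P' Q)
  then show ?case using mstep_frame by fastforce
next
  case (t_parR P g P' Q)
  then show ?case using mstep_frame2 by fastforce
next
  case (t_comL P a P' Q Q')
  obtain c M0 R1 where 1: "flat P = add_mset c M0" "trans c (AOut a) R1" "flat P' = M0 + flat R1"
    using mstep_vis[OF t_comL.IH(1)] by blast
  obtain d N0 R2 where 2: "flat Q = add_mset d N0" "trans d (AIn a) R2" "flat Q' = N0 + flat R2"
    using mstep_vis[OF t_comL.IH(2)] by blast
  have "flat (Par P Q) = add_mset c (add_mset d (M0+N0))" unfolding flat.simps(2) 1(1) 2(1) by simp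
  moreover have "flat (Par P' Q') = M0+N0 + flat R1 + flat R2" unfolding flat.simps(2) 1(3) 2(3) by (simp only: ac_simps)
  ultimately show ?case using mstep.ms_com[OF 1(2) 2(2), of "M0 + N0"] by argo
next
  case (t_comR P a P' Q Q')
  obtain c M0 R1 where 1: "flat P = add_mset c M0" "trans c (AOut a) R1" "flat P' = M0 + flat R1"
    using mstep_vis[OF t_comR.IH(1)] by blast
  obtain d N0 R2 where 2: "flat Q = add_mset d N0" "trans d (AIn a) R2" "flat Q' = N0 + flat R2"
    using mstep_vis[OF t_comR.IH(2)] by blast
  have "flat (Par Q P) = add_mset c (add_mset d (M0+N0))" unfolding flat.simps(2) 1(1) 2(1) by simp
  moreover have "flat (Par Q' P') = M0+N0 + flat R1 + flat R2" unfolding flat.simps(2) 1(3) 2(3) by (simp only: ac_simps)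
  ultimately show ?case using mstep.ms_com[OF 1(2) 2(2), of "M0 + N0"] by argo
next
  case (t_bang P g P')
  then show ?case using mstep.ms_one[OF trans.t_bang[OF t_bang.hyps], of "{#}"] by simp
next
  case (t_bangc P a P' P'')
  then show ?case using mstep.ms_one[OF trans.t_bangc[OF t_bangc.hyps], of "{#}"] by simp
qed

lemma extr: "flat X = add_mset c M \<Longrightarrow> trans c \<alpha> Q \<Longrightarrow>
    \<exists>X'. trans X \<alpha> X' \<and> flat X' = M + flat Q"
proof (induction X arbitrary: M)
  case (Par X1 X2)
  have "c \<in># flat (Par X1 X2)" using Par.prems(1) by simp
  then have "c \<in># flat X1 \<or> c \<in># flat X2" by simp
  then show ?case
  proof
    assume "c \<in># flat X1"
    then obtain A1 where A1: "flat X1 = add_mset c A1" by (metis mset_add)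
    from Par.IH(1)[OF A1 Par.prems(2)] obtain X1' where "trans X1 \<alpha> X1'" "flat X1' = A1 + flat Q" by blast
    moreover have "M = A1 + flat X2" using Par.prems(1) A1 by simp
    ultimately show ?thesis by (intro exI[of _ "Par X1' X2"]) (auto intro: trans.intros simp: ac_simps)
  next
    assume "c \<in># flat X2"
    then obtain A2 where A2: "flat X2 = add_mset c A2" by (metis mset_add)
    from Par.IH(2)[OF A2 Par.prems(2)] obtain X2' where "trans X2 \<alpha> X2'" "flat X2' = A2 + flat Q" by blast
    moreover have "M = flat X1 + A2" using Par.prems(1) A2 by simp
    ultimately show ?thesis by (intro exI[of _ "Par X1 X2'"]) (auto intro: trans.intros simp: ac_simps)
  qed
qed auto

lemma comm: "flat X = add_mset c1 (add_mset c2 M) \<Longrightarrow> trans c1 (AOut a) Q1 \<Longrightarrow> trans c2 (AIn a) Q2 \<Longrightarrow>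
    \<exists>X'. trans X Tau X' \<and> flat X' = M + flat Q1 + flat Q2"
proof (induction X arbitrary: M)
  case (Par X1 X2)
  have "c1 \<in># flat (Par X1 X2)" using Par.prems(1) by simp
  then have "c1 \<in># flat X1 \<or> c1 \<in># flat X2" by simp
  then show ?case
  proof
    assume "c1 \<in># flat X1"
    then obtain A1 where A1: "flat X1 = add_mset c1 A1" by (metis mset_add)
    have e: "A1 + flat X2 = add_mset c2 M" using Par.prems(1) A1 by simp
    then have "c2 \<in># A1 \<or> c2 \<in># flat X2" by (metis union_iff union_single_eq_member)
    then show ?thesis
    proof
      assume "c2 \<in># A1"
      then obtain A2 where A2: "A1 = add_mset c2 A2" by (metis mset_add)
      from Par.IH(1)[of A2] A1 A2 Par.prems(2,3) obtain X1' where
        "trans X1 Tau X1'" "flat X1' = A2 + flat Q1 + flat Q2" by blast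
      moreover have "M = A2 + flat X2" using e A2 by simp
      ultimately show ?thesis by (intro exI[of _ "Par X1' X2"]) (auto intro: trans.intros simp: ac_simps)
    next
      assume "c2 \<in># flat X2"
      then obtain B2 where B2: "flat X2 = add_mset c2 B2" by (metis mset_add)
      obtain X1' where 1: "trans X1 (AOut a) X1'" "flat X1' = A1 + flat Q1"
        using extr[OF A1 Par.prems(2)] by blast
      obtain X2' where 2: "trans X2 (AIn a) X2'" "flat X2' = B2 + flat Q2"
        using extr[OF B2 Par.prems(3)] by blast
      have "M = A1 + B2" using e B2 by simp
      then show ?thesis using 1 2 by (intro exI[of _ "Par X1' X2'"]) (auto intro: trans.intros simp: ac_simps)
    qed
  next
    assume "c1 \<in># flat X2"
    then obtain A1 where A1: "flat X2 = add_mset c1 A1" by (metis mset_add)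
    have e: "flat X1 + A1 = add_mset c2 M" using Par.prems(1) A1 by simp
    then have "c2 \<in># A1 \<or> c2 \<in># flat X1" by (metis union_iff union_single_eq_member)
    then show ?thesis
    proof
      assume "c2 \<in># A1"
      then obtain A2 where A2: "A1 = add_mset c2 A2" by (metis mset_add)
      from Par.IH(2)[of A2] A1 A2 Par.prems(2,3) obtain X2' where
        "trans X2 Tau X2'" "flat X2' = A2 + flat Q1 + flat Q2" by blast
      moreover have "M = flat X1 + A2" using e A2 by simp
      ultimately show ?thesis by (intro exI[of _ "Par X1 X2'"]) (auto intro: trans.intros simp: ac_simps)
    next
      assume "c2 \<in># flat X1"
      then obtain B2 where B2: "flat X1 = add_mset c2 B2" by (metis mset_add)
      obtain X2' where 1: "trans X2 (AOut a) X2'" "flat X2' = A1 + flat Q1"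
        using extr[OF A1 Par.prems(2)] by blast
      obtain X1' where 2: "trans X1 (AIn a) X1'" "flat X1' = B2 + flat Q2"
        using extr[OF B2 Par.prems(3)] by blast
      have "M = B2 + A1" using e B2 by simp
      then show ?thesis using 1 2 by (intro exI[of _ "Par X1' X2'"]) (auto intro: trans.intros simp: ac_simps)
    qed
  qed
qed auto

lemma complete: "mstep (flat X) \<alpha> M' \<Longrightarrow> \<exists>X'. trans X \<alpha> X' \<and> flat X' = M'"
  by (cases rule: mstep.cases) (auto dest: extr comm)

abbreviation mtau :: "'n proc multiset \<Rightarrow> 'n proc multiset \<Rightarrow> bool" where
  "mtau \<equiv> (\<lambda>M N. mstep M Tau N)\<^sup>*\<^sup>*"

lemma tau_sound: "tau_star X Y \<Longrightarrow> mtau (flat X) (flat Y)"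
  unfolding tau_star_def
  by (induction rule: rtranclp_induct) (auto intro: rtranclp.rtrancl_into_rtrancl sound)

lemma tau_complete: "mtau (flat X) N \<Longrightarrow> \<exists>Y. tau_star X Y \<and> flat Y = N"
proof (induction rule: rtranclp_induct)
  case base
  then show ?case by (auto simp: tau_star_def)
next
  case (step N1 N2)
  then obtain Y1 where "tau_star X Y1" "flat Y1 = N1" by blast
  with step(2) obtain Y2 where "trans Y1 Tau Y2" "flat Y2 = N2" using complete by blast
  moreover have "tau_star X Y2" using \<open>tau_star X Y1\<close> \<open>trans Y1 Tau Y2\<close> unfolding tau_star_def
    by (rule rtranclp.rtrancl_into_rtrancl)
  ultimately show ?case by blast
qed

lemma mtau_frame: "mtau M N \<Longrightarrow> mtau (M + K) (N + K)"
  by (induction rule: rtranclp_induct) (auto intro: rtranclp.rtrancl_into_rtrancl mstep_frame)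

lemma bang_res: "trans (Bang P) \<alpha> Q \<Longrightarrow> Bang P \<in># flat Q"
  by (erule trans.cases) auto

lemma persist: "mstep M \<alpha> N \<Longrightarrow> Bang P \<in># M \<Longrightarrow> Bang P \<in># N"
proof (induction rule: mstep.induct)
  case (ms_one c \<alpha> Q M)
  then show ?case using bang_res by (cases "c = Bang P") auto
next
  case (ms_com c1 a Q1 c2 Q2 M)
  then show ?case using bang_res by (cases "c1 = Bang P"; cases "c2 = Bang P") auto
qed

lemma persist_tau: "mtau M N \<Longrightarrow> Bang P \<in># M \<Longrightarrow> Bang P \<in># N"
  by (induction rule: rtranclp_induct) (auto dest: persist)

lemma divergent_inv: "(\<And>X. I X \<Longrightarrow> \<exists>X'. trans X Tau X' \<and> I X') \<Longrightarrow> I X \<Longrightarrow> divergent X"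
proof -
  assume st: "\<And>X. I X \<Longrightarrow> \<exists>X'. trans X Tau X' \<and> I X'" and i: "I X"
  define f where "f = rec_nat X (\<lambda>_ Y. SOME Y'. trans Y Tau Y' \<and> I Y')"
  have f0: "f 0 = X" and fS: "\<And>n. f (Suc n) = (SOME Y'. trans (f n) Tau Y' \<and> I Y')"
    by (simp_all add: f_def)
  have inv: "I (f n) \<and> trans (f n) Tau (f (Suc n))" for n
  proof (induction n)
    case 0
    then show ?case using someI_ex[OF st[OF i]] f0 fS[of 0] i by simp
  next
    case (Suc n)
    then have "I (f (Suc n))" using someI_ex[OF st[of "f n"]] fS[of n] by auto
    then show ?case using someI_ex[OF st[of "f (Suc n)"]] fS[of "Suc n"] by auto
  qed
  show ?thesis unfolding divergent_def using f0 inv by blast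
qed

lemma divergent_step: "divergent W \<Longrightarrow> \<exists>W'. trans W Tau W' \<and> divergent W'"
  unfolding divergent_def
proof -
  assume "\<exists>f. f 0 = W \<and> (\<forall>i. trans (f i) Tau (f (Suc i)))"
  then obtain f where "f 0 = W" "\<forall>i. trans (f i) Tau (f (Suc i))" by blast
  then show "\<exists>W'. trans W Tau W' \<and> (\<exists>f. f 0 = W' \<and> (\<forall>i. trans (f i) Tau (f (Suc i))))"
    by (intro exI[of _ "f 1"] conjI exI[of _ "\<lambda>i. f (Suc i)"]) auto
qed

lemma divergent_flat: "divergent X \<Longrightarrow> flat X = flat Y \<Longrightarrow> divergent Y"
proof -
  assume d: "divergent X" and e: "flat X = flat Y"
  show ?thesis
  proof (rule divergent_inv[where I = "\<lambda>Z. \<exists>W. divergent W \<and> flat W = flat Z"])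
    fix Z assume "\<exists>W. divergent W \<and> flat W = flat Z"
    then obtain W where W: "divergent W" "flat W = flat Z" by blast
    then obtain W' where "trans W Tau W'" "divergent W'" using divergent_step by blast
    then have "mstep (flat Z) Tau (flat W')" using sound W by metis
    then obtain Z' where "trans Z Tau Z'" "flat Z' = flat W'" using complete by blast
    then show "\<exists>Z'. trans Z Tau Z' \<and> (\<exists>W. divergent W \<and> flat W = flat Z')"
      using \<open>divergent W'\<close> by (intro exI[of _ Z'] conjI exI[of _ W']) auto
  next
    show "\<exists>W. divergent W \<and> flat W = flat Y" using d e by blast
  qed
qed

lemma divergent_bang: "trans (Bang P) Tau Q0 \<Longrightarrow> Bang P \<in># flat X \<Longrightarrow> divergent X"
proof -
  assume t: "trans (Bang P) Tau Q0" and x: "Bang P \<in># flat X"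
  show ?thesis
  proof (rule divergent_inv[where I = "\<lambda>Z. Bang P \<in># flat Z"])
    fix Z assume "Bang P \<in># flat Z"
    then obtain M where "flat Z = add_mset (Bang P) M" by (metis mset_add)
    then obtain Z' where "trans Z Tau Z'" "flat Z' = M + flat Q0" using extr t by blast
    then show "\<exists>Z'. trans Z Tau Z' \<and> Bang P \<in># flat Z'" using bang_res[OF t] by auto
  next
    show "Bang P \<in># flat X" using x .
  qed
qed

definition Rb :: "'n proc \<Rightarrow> 'n proc \<Rightarrow> 'n proc \<Rightarrow> bool" where
  "Rb P X Y = (\<exists>A B C. flat X = A + B + {#Bang P#} \<and> flat Y = A + C + {#Bang P#}
      \<and> mtau {#Bang P#} (B + {#Bang P#}) \<and> mtau {#Bang P#} (C + {#Bang P#}))"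

lemma Rb_sym: "Rb P X Y \<Longrightarrow> Rb P Y X"
  unfolding Rb_def by blast

lemma Rb_sim: "Rb P X Y \<Longrightarrow> trans X \<alpha> X' \<Longrightarrow> \<exists>Y'. weak_trans Y \<alpha> Y' \<and> Rb P X' Y'"
proof -
  assume "Rb P X Y" and t: "trans X \<alpha> X'"
  then obtain A B C where X: "flat X = A + B + {#Bang P#}" and Y: "flat Y = A + C + {#Bang P#}"
    and B: "mtau {#Bang P#} (B + {#Bang P#})" and C: "mtau {#Bang P#} (C + {#Bang P#})"
    unfolding Rb_def by blast
  have "mtau ({#Bang P#} + (A + C)) (B + {#Bang P#} + (A + C))" using mtau_frame[OF B] .
  then have "mtau (flat Y) (flat X + C)" using X Y by (simp add: ac_simps)
  then obtain Y1 where Y1: "tau_star Y Y1" "flat Y1 = flat X + C" using tau_complete by blast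
  have "mstep (flat X + C) \<alpha> (flat X' + C)" using mstep_frame sound t by blast
  then obtain Y2 where Y2: "trans Y1 \<alpha> Y2" "flat Y2 = flat X' + C" using complete Y1(2) by metis
  have "Bang P \<in># flat X'" using persist[OF sound[OF t]] X by simp
  then obtain A' where A': "flat X' = add_mset (Bang P) A'" by (metis mset_add)
  have "Rb P X' Y2" unfolding Rb_def
    by (rule exI[of _ A'], rule exI[of _ "{#}"], rule exI[of _ C]) (use A' Y2 C in auto)
  moreover have "weak_trans Y \<alpha> Y2"
    using Y1(1) Y2(1) unfolding weak_trans_def tau_star_def
    by (auto intro: rtranclp.rtrancl_into_rtrancl)
  ultimately show ?thesis by blast
qed

lemma mtau_stuck: "\<not> (\<exists>Q0. trans (Bang P) Tau Q0) \<Longrightarrow> mtau {#Bang P#} N \<Longrightarrow> N = {#Bang P#}"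
  apply (erule converse_rtranclpE)
   apply simp
  apply (erule mstep.cases)
   apply auto
  done

lemma Rb_div: "Rb P X Y \<Longrightarrow> divergent X \<Longrightarrow> divergent Y"
proof -
  assume R: "Rb P X Y" and d: "divergent X"
  then obtain A B C where X: "flat X = A + B + {#Bang P#}" and Y: "flat Y = A + C + {#Bang P#}"
    and B: "mtau {#Bang P#} (B + {#Bang P#})" and C: "mtau {#Bang P#} (C + {#Bang P#})"
    unfolding Rb_def by blast
  show ?thesis
  proof (cases "\<exists>Q0. trans (Bang P) Tau Q0")
    case True
    then show ?thesis using divergent_bang Y by fastforce
  next
    case False
    then have "B = {#}" "C = {#}" using mtau_stuck[OF False B] mtau_stuck[OF False C] by auto
    then show ?thesis using divergent_flat d X Y by metis
  qed
qed

theorem mainTheorem11: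
  fixes P P' :: "'n proc"
  assumes "infinite (UNIV :: 'n set)"
    and "tau_star (Bang P) P'"
  shows "wbisim (Bang P) P'"
proof -
  have wb: "weak_bisimulation (Rb P)"
    unfolding weak_bisimulation_def using Rb_sym Rb_sim Rb_div by metis
  have m: "mtau {#Bang P#} (flat P')" using tau_sound[OF assms(2)] by simp
  then have "Bang P \<in># flat P'" using persist_tau by fastforce
  then obtain C where C: "flat P' = add_mset (Bang P) C" by (metis mset_add)
  have "Rb P (Bang P) P'" unfolding Rb_def
    by (rule exI[of _ "{#}"], rule exI[of _ "{#}"], rule exI[of _ C]) (use m C in auto)
  then show ?thesis unfolding wbisim_def using wb by blast
qed

end
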